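(* Let $\mathcal{X}$ be a covariate space, $\mathbb{P}^X$ a distribution on $\mathcal{X}$, $A\ge0$, $\sigma>0$, and $\mathcal{C}$ a class of functions $\mathcal{X}\to\mathbb{R}$. Under the model below, $$\mathfrak{M}_n^{\mathrm{EB}}(\mathcal{C};A,\sigma^2)\ \le\ \frac{\sigma^4}{(\sigma^2+A)^2}\,\mathfrak{M}_n^{\mathrm{Reg}}(\mathcal{C};A+\sigma^2).$$
   Context: Model: for a function $m:\mathcal{X}\to\mathbb{R}$, data are i.i.d. triples with $X_i\sim\mathbb{P}^X$, $\mu_i\mid X_i\sim N(m(X_i),A)$, $Z_i\mid \mu_i\sim N(\mu_i,\sigma^2)$; only $(X_i,Z_i)$, $i=1,\dots,n$, are observed, $\sigma^2$ known. The Bayes rule is $t^*_{m,A}(x,z)=\frac{A}{\sigma^2+A}z+\frac{\sigma^2}{\sigma^2+A}m(x)$. For a denoiser $t:\mathcal{X}\times\mathbb{R}\to\mathbb{R}$, $L(t;m,A)=\mathbb{E}_{m,A}[(t(X_{n+1},Z_{n+1})-\mu_{n+1})^2]-\mathbb{E}_{m,A}[(t^*_{m,A}(X_{n+1},Z_{n+1})-\mu_{n+1})^2]$ with $(X_{n+1},\mu_{n+1},Z_{n+1})$ a fresh independent draw. $\mathfrak{M}_n^{\mathrm{EB}}(\mathcal{C};A,\sigma^2)=\inf_{\hat t_n}\sup_{m\in\mathcal{C}}\mathbb{E}_{m,A}[L(\hat t_n;m,A)]$, infimum over denoisers measurable with respect to $(X_i,Z_i)_{1\le i\le n}$. $\mathfrak{M}_n^{\mathrm{Reg}}(\mathcal{C};A+\sigma^2)=\inf_{\hat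 m_n}\sup_{m\in\mathcal{C}}\mathbb{E}_{m,A}\big[\int(\hat m_n(x)-m(x))^2d\mathbb{P}^X(x)\big]$, infimum over estimators $\hat m_n$ measurable with respect to $(X_i,Z_i)_{1\le i\le n}$ (note $Z_i\mid X_i\sim N(m(X_i),A+\sigma^2)$). *)

theory Defs
  imports "HOL-Probability.Probability"
begin

definition gauss :: "real \<Rightarrow> real \<Rightarrow> real measure" where
  "gauss mu v = (if v = 0 then return borel mu else density lborel (normal_density mu (sqrt v)))"

definition eb_model :: "'x measure \<Rightarrow> ('x \<Rightarrow> real) \<Rightarrow> real \<Rightarrow> real \<Rightarrow> ('x \<times> real \<times> real) measure" where
  "eb_model PX m A s2 =
     PX \<bind> (\<lambda>x. gauss (m x) A \<bind> (\<lambda>mu. gauss mu s2 \<bind>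
        (\<lambda>z. return (PX \<Otimes>\<^sub>M (borel \<Otimes>\<^sub>M borel)) (x, mu, z))))"

definition obs_model :: "'x measure \<Rightarrow> ('x \<Rightarrow> real) \<Rightarrow> real \<Rightarrow> real \<Rightarrow> ('x \<times> real) measure" where
  "obs_model PX m A s2 = distr (eb_model PX m A s2) (PX \<Otimes>\<^sub>M borel) (\<lambda>(x, mu, z). (x, z))"

definition data_model :: "'x measure \<Rightarrow> nat \<Rightarrow> ('x \<Rightarrow> real) \<Rightarrow> real \<Rightarrow> real \<Rightarrow> (nat \<Rightarrow> 'x \<times> real) measure" where
  "data_model PX n m A s2 = (\<Pi>\<^sub>M i\<in>{..<n}. obs_model PX m A s2)"

definition data_space :: "'x measure \<Rightarrow> nat \<Rightarrow> (nat \<Rightarrow> 'x \<times> real) measure" where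
  "data_space PX n = (\<Pi>\<^sub>M i\<in>{..<n}. PX \<Otimes>\<^sub>M borel)"

definition bayes_rule :: "('x \<Rightarrow> real) \<Rightarrow> real \<Rightarrow> real \<Rightarrow> 'x \<Rightarrow> real \<Rightarrow> real" where
  "bayes_rule m A s2 x z = A / (s2 + A) * z + s2 / (s2 + A) * m x"

definition eb_loss :: "'x measure \<Rightarrow> ('x \<Rightarrow> real \<Rightarrow> real) \<Rightarrow> ('x \<Rightarrow> real) \<Rightarrow> real \<Rightarrow> real \<Rightarrow> ennreal" where
  "eb_loss PX t m A s2 =
     (\<integral>\<^sup>+ (x, mu, z). ennreal ((t x z - mu)\<^sup>2) \<partial>eb_model PX m A s2)
   - (\<integral>\<^sup>+ (x, mu, z). ennreal ((bayes_rule m A s2 x z - mu)\<^sup>2) \<partial>eb_model PX m A s2)"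

definition eb_minimax :: "'x measure \<Rightarrow> nat \<Rightarrow> ('x \<Rightarrow> real) set \<Rightarrow> real \<Rightarrow> real \<Rightarrow> ennreal" where
  "eb_minimax PX n C A s2 =
     (INF t \<in> {t :: (nat \<Rightarrow> 'x \<times> real) \<Rightarrow> 'x \<Rightarrow> real \<Rightarrow> real.
                 (\<lambda>(d, x, z). t d x z) \<in> borel_measurable (data_space PX n \<Otimes>\<^sub>M (PX \<Otimes>\<^sub>M borel))}.
        SUP m \<in> C. \<integral>\<^sup>+ d. eb_loss PX (t d) m A s2 \<partial>data_model PX n m A s2)"

text \<open>Regression minimax risk (data generated under E_{m,A}, so Z | X ~ N(m X, A + s2)).\<close>
definition reg_minimax :: "'x measure \<Rightarrow> nat \<Rightarrow> ('x \<Rightarrow> real) set \<Rightarrow> real \<Rightarrow> real \<Rightarrow> ennreal" where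
  "reg_minimax PX n C A s2 =
     (INF mh \<in> {mh :: (nat \<Rightarrow> 'x \<times> real) \<Rightarrow> 'x \<Rightarrow> real.
                 (\<lambda>(d, x). mh d x) \<in> borel_measurable (data_space PX n \<Otimes>\<^sub>M PX)}.
        SUP m \<in> C. \<integral>\<^sup>+ d. (\<integral>\<^sup>+ x. ennreal ((mh d x - m x)\<^sup>2) \<partial>PX) \<partial>data_model PX n m A s2)"

end

theory Submission
  imports Defs
begin


lemma gauss_meas:
  assumes "v \<ge> 0"
  shows "(\<lambda>mu. gauss mu v) \<in> borel \<rightarrow>\<^sub>M subprob_algebra borel"
proof (cases "v = 0")
  case True
  then show ?thesis unfolding gauss_def by (simp add: return_measurable)
next
  case False
  then have v: "v > 0" using assms by simp
  show ?thesis
  proof (rule measurable_subprob_algebra)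
    fix mu :: real
    show "subprob_space (gauss mu v)" unfolding gauss_def using False v
      by (simp add: prob_space_imp_subprob_space prob_space_normal_density)
    show "sets (gauss mu v) = sets borel" unfolding gauss_def using False by simp
  next
    fix S :: "real set" assume S: "S \<in> sets borel"
    have "(\<lambda>mu. emeasure (gauss mu v) S) = (\<lambda>mu. \<integral>\<^sup>+ x. ennreal (normal_density mu (sqrt v) x) * indicator S x \<partial>lborel)"
      using False S by (simp add: gauss_def emeasure_density)
    also have "\<dots> \<in> borel_measurable borel"
      using S unfolding normal_density_def by measurable
    finally show "(\<lambda>mu. emeasure (gauss mu v) S) \<in> borel_measurable borel" .
  qed
qed

lemma gauss_prob: "v \<ge> 0 \<Longrightarrow> prob_space (gauss mu v)"
  by (auto simp: gauss_def prob_space_return prob_space_normal_density)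

lemma gauss_sets[simp]: "sets (gauss mu v) = sets borel"
  by (simp add: gauss_def)

lemma gauss_space[simp]: "space (gauss mu v) = UNIV"
  by (simp add: gauss_def)

lemma gauss_moment2:
  assumes "v \<ge> 0"
  shows "(\<integral>\<^sup>+ z. ennreal ((p * z + q)\<^sup>2) \<partial>gauss mu v) = ennreal (p\<^sup>2 * v + (p * mu + q)\<^sup>2)"
proof (cases "v = 0")
  case True
  then show ?thesis unfolding gauss_def by (simp add: nn_integral_return)
next
  case False
  then have v: "v > 0" using assms by simp
  define s where "s = sqrt v"
  have s: "s > 0" using v by (simp add: s_def)
  have h1: "has_bochner_integral lborel (\<lambda>x. normal_density mu s x * (x - mu) ^ 2) (s\<^sup>2)"
    using normal_moment_even[OF s, of mu 1] by (simp add: power2_eq_square)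
  have h2: "has_bochner_integral lborel (\<lambda>x. normal_density mu s x * (x - mu)) 0"
    using normal_moment_odd[OF s, of mu 0] by simp
  have h3: "has_bochner_integral lborel (\<lambda>x. normal_density mu s x) 1"
    using integrable_normal_density[OF s] integral_normal_density[OF s]
    by (simp add: has_bochner_integral_iff)
  have "has_bochner_integral lborel (\<lambda>x. p\<^sup>2 * (normal_density mu s x * (x - mu) ^ 2)
      + 2 * p * (p * mu + q) * (normal_density mu s x * (x - mu)) + (p * mu + q)\<^sup>2 * normal_density mu s x)
      (p\<^sup>2 * s\<^sup>2 + 2 * p * (p * mu + q) * 0 + (p * mu + q)\<^sup>2 * 1)"
    by (intro has_bochner_integral_add has_bochner_integral_mult_right h1 h2 h3)
  moreover have "(\<lambda>x. p\<^sup>2 * (normal_density mu s x * (x - mu) ^ 2)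
      + 2 * p * (p * mu + q) * (normal_density mu s x * (x - mu)) + (p * mu + q)\<^sup>2 * normal_density mu s x)
      = (\<lambda>x. normal_density mu s x * (p * x + q)\<^sup>2)"
    by (rule ext) (simp add: power2_eq_square algebra_simps)
  ultimately have hb: "has_bochner_integral lborel (\<lambda>x. normal_density mu s x * (p * x + q)\<^sup>2) (p\<^sup>2 * v + (p * mu + q)\<^sup>2)"
    using v by (simp add: s_def)
  have "(\<integral>\<^sup>+ z. ennreal ((p * z + q)\<^sup>2) \<partial>gauss mu v) = (\<integral>\<^sup>+ z. ennreal (normal_density mu s z) * ennreal ((p * z + q)\<^sup>2) \<partial>lborel)"
    using False by (simp add: gauss_def s_def nn_integral_density)
  also have "\<dots> = (\<integral>\<^sup>+ z. ennreal (normal_density mu s z * (p * z + q)\<^sup>2) \<partial>lborel)"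
    by (simp add: ennreal_mult)
  also have "\<dots> = ennreal (p\<^sup>2 * v + (p * mu + q)\<^sup>2)"
    using hb by (subst nn_integral_eq_integral) (auto simp: has_bochner_integral_iff)
  finally show ?thesis .
qed



lemma eb_risk:
  fixes PX :: "'x measure" and m g :: "'x \<Rightarrow> real"
  assumes PX: "prob_space PX" and m[measurable]: "m \<in> borel_measurable PX"
    and g[measurable]: "g \<in> borel_measurable PX" and A: "A \<ge> 0" and s2: "s2 > 0"
  shows "(\<integral>\<^sup>+ (x, mu, z). ennreal ((A / (s2 + A) * z + s2 / (s2 + A) * g x - mu)\<^sup>2) \<partial>eb_model PX m A s2)
    = ennreal ((A / (s2 + A))\<^sup>2 * s2 + (s2 / (s2 + A))\<^sup>2 * A) + ennreal ((s2 / (s2 + A))\<^sup>2) * (\<integral>\<^sup>+ x. ennreal ((g x - m x)\<^sup>2) \<partial>PX)"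
proof -
  define a where "a = A / (s2 + A)"
  define b where "b = s2 / (s2 + A)"
  have ab: "a - 1 = - b" using A s2 by (simp add: a_def b_def field_simps)
  define S where "S = PX \<Otimes>\<^sub>M (borel \<Otimes>\<^sub>M borel :: (real \<times> real) measure)"
  define f where "f = (\<lambda>(x, mu, z). ennreal ((a * z + b * g x - mu)\<^sup>2))"
  have fm: "f \<in> borel_measurable S" unfolding f_def S_def by measurable
  have G1: "(\<lambda>x. gauss (m x) A) \<in> PX \<rightarrow>\<^sub>M subprob_algebra borel"
    using measurable_compose[OF m gauss_meas[OF A]] .
  have G2: "(\<lambda>(x::'x, mu). gauss mu s2) \<in> PX \<Otimes>\<^sub>M borel \<rightarrow>\<^sub>M subprob_algebra borel"
    using measurable_compose[OF measurable_snd gauss_meas[of s2]] s2 by (simp add: case_prod_beta')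
  have R: "(\<lambda>((x, mu), z). return S (x, mu, z)) \<in> (PX \<Otimes>\<^sub>M borel) \<Otimes>\<^sub>M borel \<rightarrow>\<^sub>M subprob_algebra S"
  proof -
    have "(\<lambda>p::('x \<times> real) \<times> real. (fst (fst p), snd (fst p), snd p)) \<in> (PX \<Otimes>\<^sub>M borel) \<Otimes>\<^sub>M borel \<rightarrow>\<^sub>M S"
      unfolding S_def by measurable
    from measurable_compose[OF this return_measurable] show ?thesis
      by (simp add: case_prod_beta')
  qed
  have K2: "(\<lambda>(x, mu). gauss mu s2 \<bind> (\<lambda>z. return S (x, mu, z))) \<in> PX \<Otimes>\<^sub>M borel \<rightarrow>\<^sub>M subprob_algebra S"
    using measurable_bind'[OF G2, of "\<lambda>(x,mu) z. return S (x, mu, z)"] R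
    by (simp add: case_prod_beta')
  have K1: "(\<lambda>x. gauss (m x) A \<bind> (\<lambda>mu. gauss mu s2 \<bind> (\<lambda>z. return S (x, mu, z)))) \<in> PX \<rightarrow>\<^sub>M subprob_algebra S"
    using measurable_bind'[OF G1, of "\<lambda>x mu. gauss mu s2 \<bind> (\<lambda>z. return S (x, mu, z))"] K2
    by (simp add: case_prod_beta')
  have inner: "(\<integral>\<^sup>+ y. f y \<partial>(gauss (m x) A \<bind> (\<lambda>mu. gauss mu s2 \<bind> (\<lambda>z. return S (x, mu, z)))))
      = ennreal (a\<^sup>2 * s2 + b\<^sup>2 * A) + ennreal (b\<^sup>2) * ennreal ((g x - m x)\<^sup>2)" if x: "x \<in> space PX" for x
  proof -
    have K2x: "(\<lambda>mu. gauss mu s2 \<bind> (\<lambda>z. return S (x, mu, z))) \<in> gauss (m x) A \<rightarrow>\<^sub>M subprob_algebra S"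
      using measurable_Pair2[OF K2 x] by (simp add: measurable_cong_sets[OF gauss_sets refl])
    have Rx: "(\<lambda>z. return S (x, mu, z)) \<in> gauss mu s2 \<rightarrow>\<^sub>M subprob_algebra S" for mu
    proof -
      have "(\<lambda>z::real. (x, mu, z)) \<in> borel \<rightarrow>\<^sub>M S"
        unfolding S_def using x by measurable
      from measurable_compose[OF this return_measurable] show ?thesis
        by (simp add: measurable_cong_sets[OF gauss_sets refl])
    qed
    have "(\<integral>\<^sup>+ y. f y \<partial>(gauss (m x) A \<bind> (\<lambda>mu. gauss mu s2 \<bind> (\<lambda>z. return S (x, mu, z)))))
       = (\<integral>\<^sup>+ mu. \<integral>\<^sup>+ y. f y \<partial>(gauss mu s2 \<bind> (\<lambda>z. return S (x, mu, z))) \<partial>gauss (m x) A)"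
      by (rule nn_integral_bind[OF fm K2x])
    also have "\<dots> = (\<integral>\<^sup>+ mu. \<integral>\<^sup>+ z. \<integral>\<^sup>+ y. f y \<partial>return S (x, mu, z) \<partial>gauss mu s2 \<partial>gauss (m x) A)"
      by (intro nn_integral_cong nn_integral_bind[OF fm Rx])
    also have "\<dots> = (\<integral>\<^sup>+ mu. \<integral>\<^sup>+ z. ennreal ((a * z + (b * g x - mu))\<^sup>2) \<partial>gauss mu s2 \<partial>gauss (m x) A)"
      using x by (intro nn_integral_cong, subst nn_integral_return[OF _ fm]) (auto simp: S_def space_pair_measure f_def add_diff_eq)
    also have "\<dots> = (\<integral>\<^sup>+ mu. ennreal (a\<^sup>2 * s2) + ennreal (b\<^sup>2) * ennreal ((mu + (- g x))\<^sup>2) \<partial>gauss (m x) A)"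
    proof (intro nn_integral_cong)
      fix mu
      have "(a * mu + (b * g x - mu)) = - b * (mu - g x)" using ab by (simp add: algebra_simps) (metis distrib_right mult_1)
      then have "(a * mu + (b * g x - mu))\<^sup>2 = b\<^sup>2 * (mu + (- g x))\<^sup>2"
        by (simp add: power_mult_distrib)
      then have "a\<^sup>2 * s2 + (a * mu + (b * g x - mu))\<^sup>2 = a\<^sup>2 * s2 + b\<^sup>2 * (mu + (- g x))\<^sup>2"
        by simp
      then show "(\<integral>\<^sup>+ z. ennreal ((a * z + (b * g x - mu))\<^sup>2) \<partial>gauss mu s2) = ennreal (a\<^sup>2 * s2) + ennreal (b\<^sup>2) * ennreal ((mu + (- g x))\<^sup>2)"
        using s2 by (simp add: gauss_moment2 ennreal_mult[symmetric] ennreal_plus[symmetric] del: ennreal_plus)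
    qed
    also have "\<dots> = ennreal (a\<^sup>2 * s2) + ennreal (b\<^sup>2) * (\<integral>\<^sup>+ mu. ennreal ((1 * mu + (- g x))\<^sup>2) \<partial>gauss (m x) A)"
      using prob_space.emeasure_space_1[OF gauss_prob[OF A]]
      by (subst nn_integral_add) (auto simp: nn_integral_cmult measurable_cong_sets[OF gauss_sets refl])
    also have "\<dots> = ennreal (a\<^sup>2 * s2 + b\<^sup>2 * A) + ennreal (b\<^sup>2) * ennreal ((g x - m x)\<^sup>2)"
    proof -
      have "(\<integral>\<^sup>+ mu. ennreal ((1 * mu + (- g x))\<^sup>2) \<partial>gauss (m x) A) = ennreal (1\<^sup>2 * A + (1 * m x + - g x)\<^sup>2)"
        by (rule gauss_moment2[OF A])
      moreover have "ennreal (a\<^sup>2 * s2) + ennreal (b\<^sup>2) * ennreal (1\<^sup>2 * A + (1 * m x + - g x)\<^sup>2)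
          = ennreal (a\<^sup>2 * s2 + b\<^sup>2 * A) + ennreal (b\<^sup>2) * ennreal ((g x - m x)\<^sup>2)"
      proof -
        have e: "(1 * m x + - g x)\<^sup>2 = (g x - m x)\<^sup>2" by (simp add: power2_commute)
        show ?thesis using A s2 unfolding e
          by (simp add: ennreal_mult[symmetric] ennreal_plus[symmetric] distrib_left add.assoc del: ennreal_plus)
      qed
      ultimately show ?thesis by simp
    qed
    finally show ?thesis .
  qed
  have "(\<integral>\<^sup>+ y. f y \<partial>eb_model PX m A s2) = (\<integral>\<^sup>+ x. \<integral>\<^sup>+ y. f y \<partial>(gauss (m x) A \<bind> (\<lambda>mu. gauss mu s2 \<bind> (\<lambda>z. return S (x, mu, z)))) \<partial>PX)"
    unfolding eb_model_def S_def[symmetric] by (rule nn_integral_bind[OF fm K1])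
  also have "\<dots> = (\<integral>\<^sup>+ x. ennreal (a\<^sup>2 * s2 + b\<^sup>2 * A) + ennreal (b\<^sup>2) * ennreal ((g x - m x)\<^sup>2) \<partial>PX)"
    by (intro nn_integral_cong inner)
  also have "\<dots> = ennreal (a\<^sup>2 * s2 + b\<^sup>2 * A) + ennreal (b\<^sup>2) * (\<integral>\<^sup>+ x. ennreal ((g x - m x)\<^sup>2) \<partial>PX)"
    using prob_space.emeasure_space_1[OF PX]
    by (subst nn_integral_add) (auto simp: nn_integral_cmult)
  finally show ?thesis unfolding f_def a_def b_def .
qed



lemma eb_loss_bayes:
  fixes PX :: "'x measure" and m g :: "'x \<Rightarrow> real"
  assumes PX: "prob_space PX" and m: "m \<in> borel_measurable PX"
    and g: "g \<in> borel_measurable PX" and A: "A \<ge> 0" and s2: "s2 > 0"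
  shows "eb_loss PX (bayes_rule g A s2) m A s2 = ennreal ((s2 / (s2 + A))\<^sup>2) * (\<integral>\<^sup>+ x. ennreal ((g x - m x)\<^sup>2) \<partial>PX)"
proof -
  define K where "K = ennreal ((A / (s2 + A))\<^sup>2 * s2 + (s2 / (s2 + A))\<^sup>2 * A)"
  have r1: "(\<integral>\<^sup>+ (x, mu, z). ennreal ((bayes_rule g A s2 x z - mu)\<^sup>2) \<partial>eb_model PX m A s2)
     = K + ennreal ((s2 / (s2 + A))\<^sup>2) * (\<integral>\<^sup>+ x. ennreal ((g x - m x)\<^sup>2) \<partial>PX)"
    using eb_risk[OF PX m g A s2] unfolding bayes_rule_def K_def .
  have r2: "(\<integral>\<^sup>+ (x, mu, z). ennreal ((bayes_rule m A s2 x z - mu)\<^sup>2) \<partial>eb_model PX m A s2) = K"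
    using eb_risk[OF PX m m A s2] unfolding bayes_rule_def K_def by simp
  have "K \<noteq> top" by (simp add: K_def)
  then show ?thesis unfolding eb_loss_def r1 r2 by (rule ennreal_add_diff_cancel_left)
qed

lemma data_sets: "sets (data_model PX n m A s2) = sets (data_space PX n)"
  unfolding data_model_def data_space_def obs_model_def
  by (rule sets_PiM_cong) auto

lemma data_space_eq: "space (data_model PX n m A s2) = space (data_space PX n)"
  by (rule sets_eq_imp_space_eq[OF data_sets])

theorem theorem1:
  fixes PX :: "'x measure" and C :: "('x \<Rightarrow> real) set" and A \<sigma> :: real and n :: nat
  assumes "prob_space PX"
    and "C \<subseteq> borel_measurable PX"
    and "A \<ge> 0" and "\<sigma> > 0"
  shows "eb_minimax PX n C A (\<sigma>\<^sup>2)
           \<le> ennreal (\<sigma> ^ 4 / (\<sigma>\<^sup>2 + A)\<^sup>2) * reg_minimax PX n C A (\<sigma>\<^sup>2)"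
proof -
  note PX = assms(1) and A = assms(3)
  define s2 where "s2 = \<sigma>\<^sup>2"
  have s2: "s2 > 0" using assms(4) by (simp add: s2_def)
  define c where "c = \<sigma> ^ 4 / (\<sigma>\<^sup>2 + A)\<^sup>2"
  have c_eq: "c = (s2 / (s2 + A))\<^sup>2"
    by (simp add: c_def s2_def power_divide)
  have cpos: "c > 0" using s2 A by (simp add: c_eq)
  define D where "D = data_space PX n"
  define SR where "SR = (\<lambda>mh. SUP m \<in> C. \<integral>\<^sup>+ d. (\<integral>\<^sup>+ x. ennreal ((mh d x - m x)\<^sup>2) \<partial>PX) \<partial>data_model PX n m A s2)"
  have key: "eb_minimax PX n C A s2 \<le> ennreal c * SR mh"
    if hm[measurable]: "(\<lambda>(d, x). mh d x) \<in> borel_measurable (D \<Otimes>\<^sub>M PX)" for mh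
  proof -
    define t where "t = (\<lambda>d. bayes_rule (mh d) A s2)"
    have hm2: "(\<lambda>p. mh (fst p) (fst (snd p))) \<in> borel_measurable (D \<Otimes>\<^sub>M (PX \<Otimes>\<^sub>M borel))"
    proof -
      have "(\<lambda>p. (fst p, fst (snd p))) \<in> D \<Otimes>\<^sub>M (PX \<Otimes>\<^sub>M borel) \<rightarrow>\<^sub>M D \<Otimes>\<^sub>M PX" by measurable
      from measurable_compose[OF this hm] show ?thesis by (simp add: case_prod_beta')
    qed
    have tm: "(\<lambda>(d, x, z). t d x z) \<in> borel_measurable (D \<Otimes>\<^sub>M (PX \<Otimes>\<^sub>M borel))"
    proof -
      have "(\<lambda>p. A / (s2 + A) * snd (snd p) + s2 / (s2 + A) * mh (fst p) (fst (snd p))) \<in> borel_measurable (D \<Otimes>\<^sub>M (PX \<Otimes>\<^sub>M borel))"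
        using hm2 by measurable
      then show ?thesis by (simp add: t_def bayes_rule_def case_prod_beta')
    qed
    have mhd: "mh d \<in> borel_measurable PX" if "d \<in> space D" for d
      using measurable_Pair2[OF hm that] by simp
    have eq: "(\<integral>\<^sup>+ d. eb_loss PX (t d) m A s2 \<partial>data_model PX n m A s2)
        = ennreal c * (\<integral>\<^sup>+ d. (\<integral>\<^sup>+ x. ennreal ((mh d x - m x)\<^sup>2) \<partial>PX) \<partial>data_model PX n m A s2)"
      if m: "m \<in> C" for m
    proof -
      have mm[measurable]: "m \<in> borel_measurable PX" using m assms(2) by blast
      have "(\<integral>\<^sup>+ d. eb_loss PX (t d) m A s2 \<partial>data_model PX n m A s2)
          = (\<integral>\<^sup>+ d. ennreal c * (\<integral>\<^sup>+ x. ennreal ((mh d x - m x)\<^sup>2) \<partial>PX) \<partial>data_model PX n m A s2)"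
        by (intro nn_integral_cong)
          (simp add: t_def c_eq eb_loss_bayes[OF PX mm mhd A s2] data_space_eq D_def)
      also have "\<dots> = ennreal c * (\<integral>\<^sup>+ d. (\<integral>\<^sup>+ x. ennreal ((mh d x - m x)\<^sup>2) \<partial>PX) \<partial>data_model PX n m A s2)"
      proof (rule nn_integral_cmult)
        have "(\<lambda>(d, x). ennreal ((mh d x - m x)\<^sup>2)) \<in> borel_measurable (D \<Otimes>\<^sub>M PX)" by measurable
        then have "(\<lambda>d. \<integral>\<^sup>+ x. ennreal ((mh d x - m x)\<^sup>2) \<partial>PX) \<in> borel_measurable D"
          using sigma_finite_measure.borel_measurable_nn_integral[OF prob_space_imp_sigma_finite[OF PX]]
          by blast
        then show "(\<lambda>d. \<integral>\<^sup>+ x. ennreal ((mh d x - m x)\<^sup>2) \<partial>PX) \<in> borel_measurable (data_model PX n m A s2)"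
          by (simp add: measurable_cong_sets[OF data_sets refl] D_def)
      qed
      finally show ?thesis .
    qed
    have "eb_minimax PX n C A s2 \<le> (SUP m \<in> C. \<integral>\<^sup>+ d. eb_loss PX (t d) m A s2 \<partial>data_model PX n m A s2)"
      unfolding eb_minimax_def using tm by (intro INF_lower) (simp add: D_def)
    also have "\<dots> = (SUP m \<in> C. ennreal c * (\<integral>\<^sup>+ d. (\<integral>\<^sup>+ x. ennreal ((mh d x - m x)\<^sup>2) \<partial>PX) \<partial>data_model PX n m A s2))"
      by (intro SUP_cong refl eq)
    also have "\<dots> = ennreal c * SR mh"
      unfolding SR_def by (rule SUP_mult_left_ennreal[symmetric])
    finally show ?thesis .
  qed
  define ci where "ci = ennreal (1 / c)"
  have cci: "ennreal c * ci = 1" using cpos by (simp add: ci_def ennreal_mult[symmetric])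
  have "ci * eb_minimax PX n C A s2 \<le> reg_minimax PX n C A s2"
    unfolding reg_minimax_def
  proof (rule INF_greatest)
    fix mh assume "mh \<in> {mh :: (nat \<Rightarrow> 'x \<times> real) \<Rightarrow> 'x \<Rightarrow> real.
                 (\<lambda>(d, x). mh d x) \<in> borel_measurable (data_space PX n \<Otimes>\<^sub>M PX)}"
    then have "eb_minimax PX n C A s2 \<le> ennreal c * SR mh" using key by (simp add: D_def)
    then have "ci * eb_minimax PX n C A s2 \<le> ci * (ennreal c * SR mh)" by (rule mult_left_mono) simp
    also have "\<dots> = SR mh" using cci by (simp add: mult.assoc[symmetric] mult.commute)
    finally have "ci * eb_minimax PX n C A s2 \<le> SR mh" .
    then show "ci * eb_minimax PX n C A s2 \<le> (SUP m \<in> C. \<integral>\<^sup>+ d. (\<integral>\<^sup>+ x. ennreal ((mh d x - m x)\<^sup>2) \<partial>PX) \<partial>data_model PX n m A s2)"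
      by (simp add: SR_def)
  qed
  then have "ennreal c * (ci * eb_minimax PX n C A s2) \<le> ennreal c * reg_minimax PX n C A s2"
    by (rule mult_left_mono) simp
  then show ?thesis using cci by (simp add: mult.assoc[symmetric] c_def s2_def)
qed

end
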